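(* Let $f=(u,f_2(u,v),f_3(u,v)):(\mathbb R^2,0)\to(\mathbb R^3,0)$ be a smooth germ with $f_v(0,0)=0$ and $j^2f(0)$ $\mathcal A^2$-equivalent to $(u,v^2,0)$, and suppose $(f_2)_{vv}(0,0)\ne0$. Let $v(u)$ be the smooth function with $v(0)=0$ and $(f_2)_v(u,v(u))=0$ for all $u$ near $0$. Then $f$ is a frontal near $(0,0)$ if and only if $(f_3)_v(u,v(u))=0$ for all $u$ near $0$.
   Context: A map germ $f:(\mathbb R^2,0)\to(\mathbb R^3,0)$ is a frontal if there exists a smooth unit vector field $\nu$ along $f$ with $\langle df(X),\nu\rangle=0$ for all tangent vectors $X$. $\mathcal A^2$-equivalence of 2-jets means equivalence under 2-jets of diffeomorphism germs of source and target. *)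

theory Defs
  imports "HOL-Analysis.Analysis"
begin

fun dd :: "'a::real_normed_vector list \<Rightarrow> ('a \<Rightarrow> 'b::real_normed_vector) \<Rightarrow> 'a \<Rightarrow> 'b" where
  "dd [] f = f"
| "dd (h # hs) f = (\<lambda>x. frechet_derivative (dd hs f) (at x) h)"

definition smooth_on :: "'a::real_normed_vector set \<Rightarrow> ('a \<Rightarrow> 'b::real_normed_vector) \<Rightarrow> bool" where
  "smooth_on S f \<longleftrightarrow> open S \<and> (\<forall>hs. \<forall>x\<in>S. dd hs f differentiable (at x))"

definition smooth_near :: "'a::real_normed_vector \<Rightarrow> ('a \<Rightarrow> 'b::real_normed_vector) \<Rightarrow> bool" where
  "smooth_near a f \<longleftrightarrow> (\<exists>U. a \<in> U \<and> smooth_on U f)"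

definition diffeo_germ0 :: "('a::euclidean_space \<Rightarrow> 'a) \<Rightarrow> bool" where
  "diffeo_germ0 \<phi> \<longleftrightarrow> \<phi> 0 = 0 \<and>
     (\<exists>U V g. 0 \<in> U \<and> smooth_on U \<phi> \<and> smooth_on V g \<and> \<phi> ` U = V \<and>
        (\<forall>x\<in>U. g (\<phi> x) = x) \<and> (\<forall>y\<in>V. \<phi> (g y) = y))"

definition same_2jet0 :: "('a::real_normed_vector \<Rightarrow> 'b::real_normed_vector) \<Rightarrow> ('a \<Rightarrow> 'b) \<Rightarrow> bool" where
  "same_2jet0 f g \<longleftrightarrow> (\<forall>hs. length hs \<le> 2 \<longrightarrow> dd hs f 0 = dd hs g 0)"

text \<open>A^2-equivalence of the 2-jets at 0 of map germs (R^2,0) -> (R^3,0): the 2-jets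
are related by 2-jets of diffeomorphism germs of source and target (represented by
diffeomorphism germs).\<close>
definition A2_equiv :: "(real \<times> real \<Rightarrow> real \<times> real \<times> real) \<Rightarrow> (real \<times> real \<Rightarrow> real \<times> real \<times> real) \<Rightarrow> bool" where
  "A2_equiv f g \<longleftrightarrow> (\<exists>\<phi> \<psi>. diffeo_germ0 \<phi> \<and> diffeo_germ0 \<psi> \<and> same_2jet0 (\<psi> \<circ> f \<circ> \<phi>) g)"

definition frontal_near0 :: "(real \<times> real \<Rightarrow> real \<times> real \<times> real) \<Rightarrow> bool" where
  "frontal_near0 f \<longleftrightarrow> (\<exists>U \<nu>. 0 \<in> U \<and> smooth_on U \<nu> \<and> (\<forall>p\<in>U. norm (\<nu> p) = 1) \<and>
     (\<forall>p\<in>U. \<forall>X. inner (frechet_derivative f (at p) X) (\<nu> p) = 0))"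

end

theory Submission
  imports Defs
begin

lemma has_derivative_local_iff:
  assumes "open S" "x \<in> S" "\<And>y. y \<in> S \<Longrightarrow> f y = g y"
  shows "(f has_derivative D) (at x) \<longleftrightarrow> (g has_derivative D) (at x)"
  using assms has_derivative_transform_within_open[of f D x UNIV S g]
    has_derivative_transform_within_open[of g D x UNIV S f] by auto

lemma frechet_local:
  assumes "open S" "x \<in> S" "\<And>y. y \<in> S \<Longrightarrow> f y = g y"
  shows "frechet_derivative f (at x) = frechet_derivative g (at x)"
  unfolding frechet_derivative_def using has_derivative_local_iff[OF assms] by simp

lemma differentiable_local:
  assumes "open S" "x \<in> S" "\<And>y. y \<in> S \<Longrightarrow> f y = g y"
  shows "f differentiable (at x) \<longleftrightarrow> g differentiable (at x)"
  unfolding differentiable_def using has_derivative_local_iff[OF assms] by simp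

lemma dd_local:
  assumes "open S" "\<And>y. y \<in> S \<Longrightarrow> f y = g y" "x \<in> S"
  shows "dd hs f x = dd hs g x"
  using assms(3)
proof (induction hs arbitrary: x)
  case Nil then show ?case using assms by simp
next
  case (Cons h hs)
  have "frechet_derivative (dd hs f) (at x) = frechet_derivative (dd hs g) (at x)"
    by (rule frechet_local[OF assms(1) Cons.prems]) (use Cons.IH in auto)
  then show ?case by simp
qed

lemma dd_append: "dd (hs @ [h]) f = dd hs (dd [h] f)"
  by (induction hs) auto

lemma smooth_on_dd: "smooth_on S f \<Longrightarrow> smooth_on S (dd [h] f)"
  unfolding smooth_on_def by (metis dd_append)

lemma smooth_on_differentiable: "smooth_on S f \<Longrightarrow> x \<in> S \<Longrightarrow> f differentiable (at x)"
  unfolding smooth_on_def by (metis dd.simps(1))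

lemma smooth_on_open: "smooth_on S f \<Longrightarrow> open S"
  unfolding smooth_on_def by simp

lemma smooth_on_continuous: "smooth_on S f \<Longrightarrow> continuous_on S f"
  by (meson continuous_at_imp_continuous_on differentiable_imp_continuous_within smooth_on_differentiable)

lemma smooth_on_subset: "smooth_on S f \<Longrightarrow> open T \<Longrightarrow> T \<subseteq> S \<Longrightarrow> smooth_on T f"
  unfolding smooth_on_def by auto

lemma smooth_on_cong:
  assumes "smooth_on S f" "\<And>x. x \<in> S \<Longrightarrow> f x = g x"
  shows "smooth_on S g"
  unfolding smooth_on_def
proof (intro conjI allI ballI)
  show "open S" using assms smooth_on_open by auto
  fix hs x assume x: "x \<in> S"
  have "\<And>y. y \<in> S \<Longrightarrow> dd hs f y = dd hs g y"
    using dd_local[OF \<open>open S\<close> assms(2)] by auto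
  then show "dd hs g differentiable at x"
    using differentiable_local[OF \<open>open S\<close> x, of "dd hs f" "dd hs g"] assms(1) x
    unfolding smooth_on_def by auto
qed

lemma smooth_coind:
  assumes S: "open S" and P: "P f"
    and D: "\<And>g. P g \<Longrightarrow> \<forall>x\<in>S. g differentiable (at x)"
    and C: "\<And>g h. P g \<Longrightarrow> \<exists>g'. P g' \<and> (\<forall>x\<in>S. dd [h] g x = g' x)"
  shows "smooth_on S f"
proof -
  define Q where "Q g \<longleftrightarrow> (\<exists>g'. P g' \<and> (\<forall>x\<in>S. g x = g' x))" for g
  have QD: "\<forall>x\<in>S. g differentiable (at x)" if "Q g" for g
  proof
    fix x assume x: "x \<in> S"
    from that obtain g' where "P g'" "\<forall>x\<in>S. g x = g' x" unfolding Q_def by auto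
    then show "g differentiable (at x)" using D differentiable_local[OF S x, of g g'] x by auto
  qed
  have QC: "Q (dd [h] g)" if "Q g" for g h
  proof -
    from that obtain g' where g': "P g'" "\<forall>x\<in>S. g x = g' x" unfolding Q_def by auto
    obtain g'' where g'': "P g''" "\<forall>x\<in>S. dd [h] g' x = g'' x" using C[OF g'(1)] by auto
    have "\<forall>x\<in>S. dd [h] g x = dd [h] g' x" using dd_local[OF S] g'(2) by blast
    then show ?thesis unfolding Q_def using g'' by auto
  qed
  have "Q (dd hs f)" for hs
  proof (induction hs)
    case Nil then show ?case using P unfolding Q_def by auto
  next
    case (Cons h hs)
    have "dd (h # hs) f = dd [h] (dd hs f)" by simp
    then show ?case using QC[OF Cons] by simp
  qed
  then show ?thesis unfolding smooth_on_def using S QD by auto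
qed

lemma dd1_eq: "(f has_derivative D) (at x) \<Longrightarrow> dd [h] f x = D h"
  by (simp add: frechet_derivative_at[symmetric])

lemma has_derivative_dd1: "f differentiable (at x) \<Longrightarrow> (f has_derivative (\<lambda>h. dd [h] f x)) (at x)"
  by (simp add: frechet_derivative_works[symmetric])

declare dd.simps(2)[simp del]

lemma dd_single: "dd [h] f x = frechet_derivative f (at x) h"
  by (simp add: dd.simps)

lemma smooth_const: "open S \<Longrightarrow> smooth_on S (\<lambda>x. c)"
proof (rule smooth_coind[where P="\<lambda>g. \<exists>c. g = (\<lambda>x. c)"])
  fix g :: "'a \<Rightarrow> 'b" and h assume "\<exists>c. g = (\<lambda>x. c)"
  then obtain c where "g = (\<lambda>x. c)" by auto
  then show "\<exists>g'. (\<exists>c. g' = (\<lambda>x. c)) \<and> (\<forall>x\<in>S. dd [h] g x = g' x)"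
    by (intro exI[of _ "\<lambda>x. 0"]) (auto intro!: dd1_eq derivative_eq_intros)
qed auto

lemma smooth_linear:
  assumes "open S" "bounded_linear L" shows "smooth_on S L"
proof (rule smooth_coind[where P="\<lambda>g. g = L \<or> (\<exists>c. g = (\<lambda>x. c))"])
  fix g and h assume "g = L \<or> (\<exists>c. g = (\<lambda>x. c))"
  then show "\<exists>g'. (g' = L \<or> (\<exists>c. g' = (\<lambda>x. c))) \<and> (\<forall>x\<in>S. dd [h] g x = g' x)"
  proof
    assume "g = L" then show ?thesis
      by (intro exI[of _ "\<lambda>x. L h"]) (auto intro!: dd1_eq bounded_linear_imp_has_derivative assms)
  next
    assume "\<exists>c. g = (\<lambda>x. c)"
    then obtain c where "g = (\<lambda>x. c)" by auto
    then show ?thesis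
      by (intro exI[of _ "\<lambda>x. 0"]) (auto intro!: dd1_eq derivative_eq_intros)
  qed
qed (use assms bounded_linear_imp_differentiable in auto)

lemma smooth_id: "open S \<Longrightarrow> smooth_on S (\<lambda>x. x)"
  using smooth_linear[of S "\<lambda>x. x"] bounded_linear_ident by auto

lemma smooth_fst: "open S \<Longrightarrow> smooth_on S fst"
  using smooth_linear[OF _ bounded_linear_fst] by auto

lemma smooth_snd: "open S \<Longrightarrow> smooth_on S snd"
  using smooth_linear[OF _ bounded_linear_snd] by auto

lemma smooth_linear_comp:
  assumes g: "smooth_on S g" and L: "bounded_linear L" shows "smooth_on S (\<lambda>x. L (g x))"
proof (rule smooth_coind[where P="\<lambda>\<phi>. \<exists>g. smooth_on S g \<and> \<phi> = (\<lambda>x. L (g x))"])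
  show "open S" using g smooth_on_open by auto
  fix \<phi> assume "\<exists>g. smooth_on S g \<and> \<phi> = (\<lambda>x. L (g x))"
  then obtain g where g: "smooth_on S g" "\<phi> = (\<lambda>x. L (g x))" by auto
  have hd: "((\<lambda>x. L (g x)) has_derivative (\<lambda>h. L (dd [h] g x))) (at x)" if "x \<in> S" for x
    by (rule bounded_linear.has_derivative[OF L has_derivative_dd1[OF smooth_on_differentiable[OF g(1) that]]])
  show "\<forall>x\<in>S. \<phi> differentiable at x"
    using hd g(2) differentiableI by blast
  fix h
  show "\<exists>g'. (\<exists>g. smooth_on S g \<and> g' = (\<lambda>x. L (g x))) \<and> (\<forall>x\<in>S. dd [h] \<phi> x = g' x)"
  proof (intro exI[of _ "\<lambda>x. L (dd [h] g x)"] conjI ballI)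
    show "\<exists>ga. smooth_on S ga \<and> (\<lambda>x. L (dd [h] g x)) = (\<lambda>x. L (ga x))"
      using smooth_on_dd[OF g(1)] by blast
    fix x assume "x \<in> S" then show "dd [h] \<phi> x = L (dd [h] g x)"
      using dd1_eq[OF hd] g(2) by simp
  qed
qed (use g in auto)

lemma smooth_add:
  assumes a: "smooth_on S a" and b: "smooth_on S b" shows "smooth_on S (\<lambda>x. a x + b x)"
proof (rule smooth_coind[where P="\<lambda>\<phi>. \<exists>a b. smooth_on S a \<and> smooth_on S b \<and> \<phi> = (\<lambda>x. a x + b x)"])
  show "open S" using a smooth_on_open by auto
  fix \<phi> assume "\<exists>a b. smooth_on S a \<and> smooth_on S b \<and> \<phi> = (\<lambda>x. a x + b x)"
  then obtain a b where g: "smooth_on S a" "smooth_on S b" "\<phi> = (\<lambda>x. a x + b x)" by auto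
  have hd: "((\<lambda>x. a x + b x) has_derivative (\<lambda>h. dd [h] a x + dd [h] b x)) (at x)" if "x \<in> S" for x
    by (rule has_derivative_add[OF has_derivative_dd1[OF smooth_on_differentiable[OF g(1) that]]
          has_derivative_dd1[OF smooth_on_differentiable[OF g(2) that]]])
  show "\<forall>x\<in>S. \<phi> differentiable at x"
    using hd g(3) differentiableI by blast
  fix h
  show "\<exists>g'. (\<exists>a b. smooth_on S a \<and> smooth_on S b \<and> g' = (\<lambda>x. a x + b x)) \<and> (\<forall>x\<in>S. dd [h] \<phi> x = g' x)"
  proof (rule exI[of _ "\<lambda>x. dd [h] a x + dd [h] b x"], intro conjI ballI)
    show "\<exists>aa ba. smooth_on S aa \<and> smooth_on S ba \<and> (\<lambda>x. dd [h] a x + dd [h] b x) = (\<lambda>x. aa x + ba x)"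
      using smooth_on_dd[OF g(1)] smooth_on_dd[OF g(2)] by blast
    fix x assume "x \<in> S" then show "dd [h] \<phi> x = dd [h] a x + dd [h] b x"
      using dd1_eq[OF hd] g(3) by simp
  qed
qed (use a b in auto)

lemma smooth_pair:
  assumes a: "smooth_on S a" and b: "smooth_on S b" shows "smooth_on S (\<lambda>x. (a x, b x))"
proof (rule smooth_coind[where P="\<lambda>\<phi>. \<exists>a b. smooth_on S a \<and> smooth_on S b \<and> \<phi> = (\<lambda>x. (a x, b x))"])
  show "open S" using a smooth_on_open by auto
  fix \<phi> assume "\<exists>a b. smooth_on S a \<and> smooth_on S b \<and> \<phi> = (\<lambda>x. (a x, b x))"
  then obtain a b where g: "smooth_on S a" "smooth_on S b" "\<phi> = (\<lambda>x. (a x, b x))" by auto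
  have hd: "((\<lambda>x. (a x, b x)) has_derivative (\<lambda>h. (dd [h] a x, dd [h] b x))) (at x)" if "x \<in> S" for x
    by (rule has_derivative_Pair[OF has_derivative_dd1[OF smooth_on_differentiable[OF g(1) that]]
          has_derivative_dd1[OF smooth_on_differentiable[OF g(2) that]]])
  show "\<forall>x\<in>S. \<phi> differentiable at x"
    using hd g(3) differentiableI by blast
  fix h
  show "\<exists>g'. (\<exists>a b. smooth_on S a \<and> smooth_on S b \<and> g' = (\<lambda>x. (a x, b x))) \<and> (\<forall>x\<in>S. dd [h] \<phi> x = g' x)"
  proof (intro exI[of _ "\<lambda>x. (dd [h] a x, dd [h] b x)"] conjI ballI)
    show "\<exists>aa ba. smooth_on S aa \<and> smooth_on S ba \<and> (\<lambda>x. (dd [h] a x, dd [h] b x)) = (\<lambda>x. (aa x, ba x))"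
      using smooth_on_dd[OF g(1)] smooth_on_dd[OF g(2)] by blast
    fix x assume "x \<in> S" then show "dd [h] \<phi> x = (dd [h] a x, dd [h] b x)"
      using dd1_eq[OF hd] g(3) by simp
  qed
qed (use a b in auto)

inductive mcls :: "'a::real_normed_vector set \<Rightarrow> ('a \<Rightarrow> real) \<Rightarrow> bool" for S where
  mc1: "smooth_on S a \<Longrightarrow> smooth_on S b \<Longrightarrow> mcls S (\<lambda>x. a x * b x)"
| mc2: "mcls S f \<Longrightarrow> mcls S g \<Longrightarrow> mcls S (\<lambda>x. f x + g x)"

lemma mcls_diff: "mcls S f \<Longrightarrow> x \<in> S \<Longrightarrow> f differentiable (at x)"
proof (induction rule: mcls.induct)
  case (mc1 a b) then show ?case using differentiable_mult smooth_on_differentiable by blast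
qed (auto intro!: differentiable_add)

lemma mcls_dd: "mcls S f \<Longrightarrow> open S \<Longrightarrow> \<exists>g'. mcls S g' \<and> (\<forall>x\<in>S. dd [h] f x = g' x)"
proof (induction rule: mcls.induct)
  case (mc1 a b)
  show ?case
    apply (intro exI[of _ "\<lambda>x. (\<lambda>x. dd [h] a x * b x) x + (\<lambda>x. a x * dd [h] b x) x"] conjI)
     apply (intro mcls.intros smooth_on_dd mc1(1,2))
  proof
    fix x assume x: "x \<in> S"
    have "((\<lambda>x. a x * b x) has_derivative (\<lambda>h. a x * dd [h] b x + dd [h] a x * b x)) (at x)"
      by (rule has_derivative_mult[OF has_derivative_dd1[OF smooth_on_differentiable[OF mc1(1) x]]
          has_derivative_dd1[OF smooth_on_differentiable[OF mc1(2) x]]])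
    from dd1_eq[OF this] show "dd [h] (\<lambda>x. a x * b x) x = dd [h] a x * b x + a x * dd [h] b x" by (simp add: add.commute)
  qed
next
  case (mc2 f g)
  then obtain f' g' where fg: "mcls S f'" "mcls S g'" "\<forall>x\<in>S. dd [h] f x = f' x" "\<forall>x\<in>S. dd [h] g x = g' x"
    by auto
  show ?case
  proof (intro exI[of _ "\<lambda>x. f' x + g' x"] conjI ballI)
    show "mcls S (\<lambda>x. f' x + g' x)" using fg by (auto intro: mcls.intros)
    fix x assume x: "x \<in> S"
    have "((\<lambda>x. f x + g x) has_derivative (\<lambda>h. dd [h] f x + dd [h] g x)) (at x)"
      by (rule has_derivative_add[OF has_derivative_dd1[OF mcls_diff[OF mc2(1) x]]
          has_derivative_dd1[OF mcls_diff[OF mc2(2) x]]])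
    from dd1_eq[OF this] show "dd [h] (\<lambda>x. f x + g x) x = f' x + g' x" using fg x by simp
  qed
qed

lemma smooth_mult:
  assumes a: "smooth_on S a" and b: "smooth_on S b" shows "smooth_on S (\<lambda>x. a x * b x :: real)"
proof (rule smooth_coind[where P="mcls S"])
  show "open S" using smooth_on_open[OF a] .
  show "mcls S (\<lambda>x. a x * b x)" by (rule mc1[OF a b])
  show "\<forall>x\<in>S. g differentiable at x" if "mcls S g" for g using mcls_diff[OF that] by blast
  show "\<exists>g'. mcls S g' \<and> (\<forall>x\<in>S. dd [h] g x = g' x)" if "mcls S g" for g h
    using mcls_dd[OF that smooth_on_open[OF a]] by blast
qed

lemma smooth_scale: "smooth_on S a \<Longrightarrow> smooth_on S (\<lambda>x. c * a x :: real)"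
  using smooth_linear_comp[of S a "\<lambda>y. c * y"] bounded_linear_mult_right by auto

lemma smooth_minus: "smooth_on S a \<Longrightarrow> smooth_on S (\<lambda>x. - a x)"
  using smooth_linear_comp[of S a "\<lambda>y. - y"] bounded_linear_minus[OF bounded_linear_ident] by auto

lemma smooth_diff: "smooth_on S a \<Longrightarrow> smooth_on S b \<Longrightarrow> smooth_on S (\<lambda>x. a x - b x)"
  using smooth_add[OF _ smooth_minus, of S a b] by simp

lemma lin1: "linear (L :: real \<Rightarrow> real) \<Longrightarrow> L k = k * L 1"
  using linear_cmul[of L k 1] by simp

lemma lin2: "linear (L :: real \<times> real \<Rightarrow> real) \<Longrightarrow> L (s, t) = s * L (1, 0) + t * L (0, 1)"
proof -
  assume L: "linear L"
  have "(s, t) = s *\<^sub>R (1::real, 0::real) + t *\<^sub>R (0, 1)" by simp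
  then have "L (s, t) = L (s *\<^sub>R (1, 0)) + L (t *\<^sub>R (0, 1))" using linear_add[OF L] by metis
  moreover have "L (s *\<^sub>R (1, 0)) = s *\<^sub>R L (1, 0)" "L (t *\<^sub>R (0, 1)) = t *\<^sub>R L (0, 1)"
    by (rule linear_cmul[OF L])+
  ultimately show ?thesis by simp
qed

lemma dd_linear1: "f differentiable (at x) \<Longrightarrow> dd [k] (f :: real \<Rightarrow> real) x = k * dd [1] f x"
  using lin1[OF has_derivative_linear[OF has_derivative_dd1]] by blast

lemma dd_linear2: "f differentiable (at x) \<Longrightarrow> dd [(s, t)] (f :: real \<times> real \<Rightarrow> real) x = s * dd [(1,0)] f x + t * dd [(0,1)] f x"
proof -
  assume "f differentiable (at x)"
  from lin2[OF has_derivative_linear[OF has_derivative_dd1[OF this]]] show ?thesis by blast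
qed

lemma has_derivative_comp1:
  assumes "\<psi> differentiable (at (fst p))"
  shows "((\<lambda>p::real\<times>real. \<psi> (fst p) :: real) has_derivative (\<lambda>h. fst h * dd [1] \<psi> (fst p))) (at p)"
proof -
  have "((\<psi> \<circ> fst) has_derivative ((\<lambda>k. dd [k] \<psi> (fst p)) \<circ> fst)) (at p)"
    by (rule diff_chain_at[OF bounded_linear_imp_has_derivative[OF bounded_linear_fst] has_derivative_dd1[OF assms]])
  moreover have e: "\<And>h::real\<times>real. dd [fst h] \<psi> (fst p) = fst h * dd [1] \<psi> (fst p)"
    using dd_linear1[OF assms] by blast
  ultimately show ?thesis by (simp add: o_def e)
qed

lemma smooth_comp1:
  assumes psi: "smooth_on I \<psi>"
  shows "smooth_on (I \<times> (UNIV::real set)) (\<lambda>p::real\<times>real. \<psi> (fst p) :: real)"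
proof (rule smooth_coind[where P="\<lambda>\<phi>. \<exists>c \<psi>. smooth_on I \<psi> \<and> \<phi> = (\<lambda>p. c * \<psi> (fst p))"])
  show "open (I \<times> (UNIV :: real set))" using smooth_on_open[OF psi] by (simp add: open_Times)
  show "\<exists>c \<psi>'. smooth_on I \<psi>' \<and> (\<lambda>p::real\<times>real. \<psi> (fst p)) = (\<lambda>p. c * \<psi>' (fst p))"
    using psi by (intro exI[of _ "1::real"] exI[of _ \<psi>]) auto
  fix \<phi> :: "real \<times> real \<Rightarrow> real" assume "\<exists>c \<psi>. smooth_on I \<psi> \<and> \<phi> = (\<lambda>p. c * \<psi> (fst p))"
  then obtain c \<psi> where g: "smooth_on I \<psi>" "\<phi> = (\<lambda>p. c * \<psi> (fst p))" by auto
  have hd: "(\<phi> has_derivative (\<lambda>h. c * (fst h * dd [1] \<psi> (fst p)))) (at p)" if "p \<in> I \<times> (UNIV::real set)" for p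
    unfolding g(2)
    by (rule has_derivative_mult_right[OF has_derivative_comp1[OF smooth_on_differentiable[OF g(1)]]])
      (use that in auto)
  show "\<forall>x\<in>I \<times> (UNIV::real set). \<phi> differentiable at x"
    using hd differentiableI by blast
  fix h :: "real \<times> real"
  show "\<exists>g'. (\<exists>c \<psi>. smooth_on I \<psi> \<and> g' = (\<lambda>p. c * \<psi> (fst p))) \<and> (\<forall>x\<in>I \<times> (UNIV::real set). dd [h] \<phi> x = g' x)"
  proof (rule exI[of _ "\<lambda>p. (c * fst h) * dd [1] \<psi> (fst p)"], intro conjI ballI)
    show "\<exists>ca \<psi>'. smooth_on I \<psi>' \<and> (\<lambda>p. (c * fst h) * dd [1] \<psi> (fst p)) = (\<lambda>p. ca * \<psi>' (fst p))"
      using smooth_on_dd[OF g(1)] by (intro exI[of _ "c * fst h"] exI[of _ "dd [1] \<psi>"]) auto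
    fix x assume "x \<in> I \<times> (UNIV::real set)" then show "dd [h] \<phi> x = (c * fst h) * dd [1] \<psi> (fst x)"
      using dd1_eq[OF hd] by simp
  qed
qed

lemma smooth_powr: "smooth_on {0<..} (\<lambda>s::real. s powr r)"
proof (rule smooth_coind[where P="\<lambda>\<phi>. \<exists>c r. \<phi> = (\<lambda>s. c * s powr r)"])
  fix \<phi> :: "real \<Rightarrow> real" assume "\<exists>c r. \<phi> = (\<lambda>s. c * s powr r)"
  then obtain c r where g: "\<phi> = (\<lambda>s. c * s powr r)" by auto
  have hd: "(\<phi> has_derivative (\<lambda>h. c * ((r * s powr (r - 1)) * h))) (at s)" if "s \<in> {0<..}" for s
    unfolding g
    by (rule has_derivative_mult_right[OF has_field_derivative_imp_has_derivative[OF has_real_derivative_powr]])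
      (use that in auto)
  show "\<forall>x\<in>{0<..}. \<phi> differentiable at x"
    using hd differentiableI by blast
  fix h :: real
  show "\<exists>g'. (\<exists>c r. g' = (\<lambda>s. c * s powr r)) \<and> (\<forall>x\<in>{0<..}. dd [h] \<phi> x = g' x)"
  proof (rule exI[of _ "\<lambda>s. (c * r * h) * s powr (r - 1)"], intro conjI ballI)
    show "\<exists>ca ra. (\<lambda>s. (c * r * h) * s powr (r - 1)) = (\<lambda>s. ca * s powr ra)"
      by (intro exI[of _ "c * r * h"] exI[of _ "r - 1"]) simp
    fix x :: real assume "x \<in> {0<..}" then show "dd [h] \<phi> x = (c * r * h) * x powr (r - 1)"
      using dd1_eq[OF hd] by simp
  qed
next
  show "\<exists>c ra. (\<lambda>s::real. s powr r) = (\<lambda>s. c * s powr ra)"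
    by (intro exI[of _ "1::real"] exI[of _ r]) simp
qed auto

inductive ccls :: "'a::real_normed_vector set \<Rightarrow> (real \<times> real) set \<Rightarrow> ('a \<Rightarrow> real) \<Rightarrow> ('a \<Rightarrow> real) \<Rightarrow> ('a \<Rightarrow> real) \<Rightarrow> bool"
  for S T a b where
  cc1: "smooth_on S c \<Longrightarrow> smooth_on T g \<Longrightarrow> ccls S T a b (\<lambda>x. c x * g (a x, b x))"
| cc2: "ccls S T a b f \<Longrightarrow> ccls S T a b f' \<Longrightarrow> ccls S T a b (\<lambda>x. f x + f' x)"

lemma has_derivative_comp2:
  assumes a: "a differentiable (at x)" and b: "b differentiable (at x)"
    and g: "g differentiable (at (a x, b x))"
  shows "((\<lambda>x. g (a x, b x) :: real) has_derivative
     (\<lambda>h. dd [h] a x * dd [(1,0)] g (a x, b x) + dd [h] b x * dd [(0,1)] g (a x, b x))) (at x)"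
proof -
  have "((g \<circ> (\<lambda>x. (a x, b x))) has_derivative ((\<lambda>k. dd [k] g (a x, b x)) \<circ> (\<lambda>h. (dd [h] a x, dd [h] b x)))) (at x)"
    by (rule diff_chain_at[OF has_derivative_Pair[OF has_derivative_dd1[OF a] has_derivative_dd1[OF b]]
          has_derivative_dd1[OF g]])
  moreover have e: "\<And>h. dd [(dd [h] a x, dd [h] b x)] g (a x, b x) =
      dd [h] a x * dd [(1,0)] g (a x, b x) + dd [h] b x * dd [(0,1)] g (a x, b x)"
    using dd_linear2[OF g] by blast
  ultimately show ?thesis by (simp add: o_def e)
qed

context
  fixes S :: "'a::real_normed_vector set" and T :: "(real \<times> real) set" and a b :: "'a \<Rightarrow> real"
  assumes a: "smooth_on S a" and b: "smooth_on S b" and abT: "\<And>x. x \<in> S \<Longrightarrow> (a x, b x) \<in> T"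
begin

lemma ccls_diff: "ccls S T a b f \<Longrightarrow> x \<in> S \<Longrightarrow> f differentiable (at x)"
proof (induction rule: ccls.induct)
  case (cc1 c g)
  have "g differentiable (at (a x, b x))" using smooth_on_differentiable[OF cc1(2) abT[OF cc1(3)]] .
  then have "(\<lambda>x. g (a x, b x)) differentiable (at x)"
    using has_derivative_comp2[OF smooth_on_differentiable[OF a cc1(3)] smooth_on_differentiable[OF b cc1(3)]]
      differentiableI by blast
  then show ?case using differentiable_mult smooth_on_differentiable[OF cc1(1,3)] by blast
qed (auto intro!: differentiable_add)

lemma ccls_dd: "ccls S T a b f \<Longrightarrow> \<exists>g'. ccls S T a b g' \<and> (\<forall>x\<in>S. dd [h] f x = g' x)"
proof (induction rule: ccls.induct)
  case (cc1 c g)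
  define c1 where "c1 x = dd [h] c x" for x
  define c2 where "c2 x = c x * dd [h] a x" for x
  define c3 where "c3 x = c x * dd [h] b x" for x
  have s1: "smooth_on S c1" unfolding c1_def by (rule smooth_on_dd[OF cc1(1)])
  have s2: "smooth_on S c2" unfolding c2_def by (rule smooth_mult[OF cc1(1) smooth_on_dd[OF a]])
  have s3: "smooth_on S c3" unfolding c3_def by (rule smooth_mult[OF cc1(1) smooth_on_dd[OF b]])
  show ?case
  proof (rule exI[of _ "\<lambda>x. (\<lambda>x. (\<lambda>x. c1 x * g (a x, b x)) x + (\<lambda>x. c2 x * dd [(1,0)] g (a x, b x)) x) x
        + (\<lambda>x. c3 x * dd [(0,1)] g (a x, b x)) x"], intro conjI ballI)
    show "ccls S T a b (\<lambda>x. (\<lambda>x. (\<lambda>x. c1 x * g (a x, b x)) x + (\<lambda>x. c2 x * dd [(1,0)] g (a x, b x)) x) x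
        + (\<lambda>x. c3 x * dd [(0,1)] g (a x, b x)) x)"
      by (intro ccls.intros s1 s2 s3 cc1(2) smooth_on_dd)
    fix x assume x: "x \<in> S"
    have "((\<lambda>x. c x * g (a x, b x)) has_derivative (\<lambda>h. c x * (dd [h] a x * dd [(1,0)] g (a x, b x) + dd [h] b x * dd [(0,1)] g (a x, b x))
          + dd [h] c x * g (a x, b x))) (at x)"
      by (rule has_derivative_mult[OF has_derivative_dd1[OF smooth_on_differentiable[OF cc1(1) x]]
            has_derivative_comp2[OF smooth_on_differentiable[OF a x] smooth_on_differentiable[OF b x]
              smooth_on_differentiable[OF cc1(2) abT[OF x]]]])
    from dd1_eq[OF this] show "dd [h] (\<lambda>x. c x * g (a x, b x)) x = (c1 x * g (a x, b x) + c2 x * dd [(1,0)] g (a x, b x))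
        + c3 x * dd [(0,1)] g (a x, b x)"
      unfolding c1_def c2_def c3_def by (simp add: algebra_simps)
  qed
next
  case (cc2 f f')
  then obtain g1 g2 where fg: "ccls S T a b g1" "ccls S T a b g2" "\<forall>x\<in>S. dd [h] f x = g1 x" "\<forall>x\<in>S. dd [h] f' x = g2 x"
    by auto
  show ?case
  proof (rule exI[of _ "\<lambda>x. g1 x + g2 x"], intro conjI ballI)
    show "ccls S T a b (\<lambda>x. g1 x + g2 x)" using fg by (auto intro: ccls.intros)
    fix x assume x: "x \<in> S"
    have "((\<lambda>x. f x + f' x) has_derivative (\<lambda>h. dd [h] f x + dd [h] f' x)) (at x)"
      by (rule has_derivative_add[OF has_derivative_dd1[OF ccls_diff[OF cc2(1) x]]
          has_derivative_dd1[OF ccls_diff[OF cc2(2) x]]])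
    from dd1_eq[OF this] show "dd [h] (\<lambda>x. f x + f' x) x = g1 x + g2 x" using fg x by simp
  qed
qed

lemma smooth_comp2:
  assumes g: "smooth_on T (g :: real \<times> real \<Rightarrow> real)" shows "smooth_on S (\<lambda>x. g (a x, b x))"
proof (rule smooth_coind[where P="ccls S T a b"])
  show "open S" using smooth_on_open[OF a] .
  have "ccls S T a b (\<lambda>x. 1 * g (a x, b x))" by (rule cc1[OF smooth_const[OF \<open>open S\<close>] g])
  then show "ccls S T a b (\<lambda>x. g (a x, b x))" by simp
  show "\<forall>x\<in>S. f differentiable at x" if "ccls S T a b f" for f using ccls_diff[OF that] by blast
  show "\<exists>g'. ccls S T a b g' \<and> (\<forall>x\<in>S. dd [h] f x = g' x)" if "ccls S T a b f" for f h
    using ccls_dd[OF that] by blast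
qed

end

lemma smooth_comp_1var:
  fixes \<psi> :: "real \<Rightarrow> real" and a :: "'a::real_normed_vector \<Rightarrow> real"
  assumes psi: "smooth_on I \<psi>" and a: "smooth_on S a" and aI: "\<And>x. x \<in> S \<Longrightarrow> a x \<in> I"
  shows "smooth_on S (\<lambda>x. \<psi> (a x))"
proof -
  have abT: "(a x, 0) \<in> I \<times> UNIV" if "x \<in> S" for x using aI[OF that] by simp
  have "smooth_on S (\<lambda>x. \<psi> (fst (a x, 0::real)))"
    by (rule smooth_comp2[of S a "\<lambda>x. 0" "I \<times> UNIV" "\<lambda>p. \<psi> (fst p)", OF a smooth_const[OF smooth_on_open[OF a]] abT smooth_comp1[OF psi]])
  then show ?thesis by simp
qed

lemma smooth_powr_comp:
  fixes a :: "'a::real_normed_vector \<Rightarrow> real"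
  assumes a: "smooth_on S a" and pos: "\<And>x. x \<in> S \<Longrightarrow> a x > 0"
  shows "smooth_on S (\<lambda>x. a x powr r)"
  by (rule smooth_comp_1var[OF smooth_powr a]) (use pos in simp)

definition Bx :: "real \<Rightarrow> (real \<times> real) set" where
  "Bx d = {-d<..<d} \<times> {-d<..<d}"

lemma Bx_open: "open (Bx d)" unfolding Bx_def by (intro open_Times) auto
lemma Bx_convex: "convex (Bx d)" unfolding Bx_def by (intro convex_Times) auto

lemma Bx_scale: "x \<in> Bx d \<Longrightarrow> t \<in> {0..1} \<Longrightarrow> (fst x, t * snd x) \<in> Bx d"
proof -
  assume x: "x \<in> Bx d" and t: "t \<in> {0..1}"
  have "\<bar>t * snd x\<bar> \<le> \<bar>snd x\<bar>" using t by (auto simp: abs_mult intro: mult_left_le_one_le)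
  then show ?thesis using x unfolding Bx_def by (auto simp: abs_less_iff)
qed

definition Iop :: "nat \<Rightarrow> (real \<times> real \<Rightarrow> real) \<Rightarrow> real \<times> real \<Rightarrow> real" where
  "Iop n K x = integral {0..1} (\<lambda>t. t ^ n * K (fst x, t * snd x))"

lemma cont_param:
  assumes K: "continuous_on (Bx d) K"
  shows "continuous_on (Bx d \<times> {0..1}) (\<lambda>(x, t). t ^ n * K (fst x, t * snd x))"
proof -
  have "continuous_on (Bx d \<times> {0..1}) (\<lambda>z. K (fst (fst z), snd z * snd (fst z)))"
    by (rule continuous_on_compose2[OF K]) (auto intro!: continuous_intros Bx_scale)
  then have "continuous_on (Bx d \<times> {0..1}) (\<lambda>z. snd z ^ n * K (fst (fst z), snd z * snd (fst z)))"
    by (intro continuous_intros)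
  then show ?thesis by (simp add: case_prod_beta)
qed

lemma cont_param_t:
  assumes K: "continuous_on (Bx d) K" and x: "x \<in> Bx d"
  shows "continuous_on {0..1} (\<lambda>t. t ^ n * K (fst x, t * snd x))"
proof -
  have "continuous_on {0..1} (\<lambda>t. K (fst x, t * snd x))"
    by (rule continuous_on_compose2[OF K]) (auto intro!: continuous_intros Bx_scale x)
  then show ?thesis by (intro continuous_intros)
qed

lemma integrable_param:
  assumes K: "continuous_on (Bx d) K" and x: "x \<in> Bx d"
  shows "(\<lambda>t. t ^ n * K (fst x, t * snd x)) integrable_on {0..1}"
  by (rule integrable_continuous_interval[OF cont_param_t[OF K x]])

lemma Iop_deriv:
  assumes K: "smooth_on (Bx d) K" and x0: "x0 \<in> Bx d"
  shows "(Iop n K has_derivative (\<lambda>h. fst h * Iop n (dd [(1,0)] K) x0 + snd h * Iop (Suc n) (dd [(0,1)] K) x0)) (at x0)"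
proof -
  define K1 where "K1 = dd [(1,0)] K"
  define K2 where "K2 = dd [(0,1)] K"
  have cK: "continuous_on (Bx d) K" by (rule smooth_on_continuous[OF K])
  have cK1: "continuous_on (Bx d) K1" unfolding K1_def by (rule smooth_on_continuous[OF smooth_on_dd[OF K]])
  have cK2: "continuous_on (Bx d) K2" unfolding K2_def by (rule smooth_on_continuous[OF smooth_on_dd[OF K]])
  define L1 where "L1 = Blinfun (\<lambda>h::real\<times>real. fst h)"
  define L2 where "L2 = Blinfun (\<lambda>h::real\<times>real. snd h)"
  have L1: "blinfun_apply L1 h = fst h" for h unfolding L1_def by (simp only: bounded_linear_Blinfun_apply[OF bounded_linear_fst])
  have L2: "blinfun_apply L2 h = snd h" for h unfolding L2_def by (simp only: bounded_linear_Blinfun_apply[OF bounded_linear_snd])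
  define f where "f x t = t ^ n * K (fst x, t * snd x)" for x :: "real \<times> real" and t :: real
  define fx where "fx x t = (t ^ n * K1 (fst x, t * snd x)) *\<^sub>R L1 + (t ^ Suc n * K2 (fst x, t * snd x)) *\<^sub>R L2"
    for x :: "real \<times> real" and t :: real
  have fx_apply: "blinfun_apply (fx x t) h = t ^ n * K1 (fst x, t * snd x) * fst h + t ^ Suc n * K2 (fst x, t * snd x) * snd h"
    for x t h unfolding fx_def by (simp add: L1 L2 plus_blinfun.rep_eq scaleR_blinfun.rep_eq)
  have "((\<lambda>x. integral (cbox 0 1) (f x)) has_derivative integral (cbox 0 1) (fx x0)) (at x0 within Bx d)"
  proof (rule leibniz_rule)
    fix x t assume x: "x \<in> Bx d" and t: "t \<in> cbox (0::real) 1"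
    have tt: "t \<in> {0..1}" using t by simp
    have xt: "(fst x, t * snd x) \<in> Bx d" by (rule Bx_scale[OF x tt])
    have dfst: "fst differentiable (at x)" by (rule bounded_linear_imp_differentiable[OF bounded_linear_fst])
    have bls: "bounded_linear (\<lambda>x::real\<times>real. t * snd x)"
      by (rule bounded_linear_compose[OF bounded_linear_mult_right bounded_linear_snd])
    have dsnd: "(\<lambda>x. t * snd x) differentiable (at x)"
      by (rule bounded_linear_imp_differentiable[OF bls])
    have "((\<lambda>x. K (fst x, t * snd x)) has_derivative
        (\<lambda>h. dd [h] fst x * dd [(1,0)] K (fst x, t * snd x) + dd [h] (\<lambda>x. t * snd x) x * dd [(0,1)] K (fst x, t * snd x))) (at x)"
      by (rule has_derivative_comp2[OF dfst dsnd smooth_on_differentiable[OF K xt]])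
    moreover have "dd [h] fst x = fst h" for h
      by (rule dd1_eq[OF bounded_linear_imp_has_derivative[OF bounded_linear_fst]])
    moreover have "dd [h] (\<lambda>x. t * snd x) x = t * snd h" for h
      using dd1_eq[OF bounded_linear_imp_has_derivative[OF bls]] by simp
    ultimately have "((\<lambda>x. K (fst x, t * snd x)) has_derivative
        (\<lambda>h. fst h * K1 (fst x, t * snd x) + t * snd h * K2 (fst x, t * snd x))) (at x)"
      unfolding K1_def K2_def by simp
    from has_derivative_mult_right[OF this, of "t ^ n"]
    have "((\<lambda>x. f x t) has_derivative blinfun_apply (fx x t)) (at x)"
      unfolding f_def fx_apply by (simp add: algebra_simps fx_apply[abs_def])
    then show "((\<lambda>x. f x t) has_derivative blinfun_apply (fx x t)) (at x within Bx d)"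
      by (rule has_derivative_at_withinI)
  next
    fix x assume "x \<in> Bx d"
    then show "f x integrable_on cbox 0 1" unfolding f_def using integrable_param[OF cK] by simp
  next
    have c1: "continuous_on (Bx d \<times> {0..1}) (\<lambda>(x, t). t ^ n * K1 (fst x, t * snd x))"
      by (rule cont_param[OF cK1])
    have c2: "continuous_on (Bx d \<times> {0..1}) (\<lambda>(x, t). t ^ Suc n * K2 (fst x, t * snd x))"
      by (rule cont_param[OF cK2])
    have "continuous_on (Bx d \<times> {0..1}) (\<lambda>z. (\<lambda>(x, t). t ^ n * K1 (fst x, t * snd x)) z *\<^sub>R L1 +
        (\<lambda>(x, t). t ^ Suc n * K2 (fst x, t * snd x)) z *\<^sub>R L2)"
      by (intro continuous_on_add continuous_on_scaleR c1 c2 continuous_on_const)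
    then show "continuous_on (Bx d \<times> cbox 0 1) (\<lambda>(x, t). fx x t)"
      unfolding fx_def by (simp add: case_prod_beta)
  qed (use x0 Bx_convex in auto)
  then have D: "((\<lambda>x. integral {0..1} (f x)) has_derivative integral {0..1} (fx x0)) (at x0)"
    using at_within_open[OF x0 Bx_open] by simp
  have E1: "blinfun_apply (integral {0..1} (fx x0)) h = fst h * Iop n K1 x0 + snd h * Iop (Suc n) K2 x0" for h
  proof -
    have c1: "continuous_on {0..1} (\<lambda>t. t ^ n * K1 (fst x0, t * snd x0))" by (rule cont_param_t[OF cK1 x0])
    have c2: "continuous_on {0..1} (\<lambda>t. t ^ Suc n * K2 (fst x0, t * snd x0))" by (rule cont_param_t[OF cK2 x0])
    have ifx: "fx x0 integrable_on {0..1}" unfolding fx_def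
      by (intro integrable_add integrable_continuous_interval continuous_on_scaleR c1 c2 continuous_on_const)
    have "blinfun_apply (integral {0..1} (fx x0)) h = integral {0..1} (\<lambda>t. blinfun_apply (fx x0 t) h)"
      by (rule blinfun_apply_integral[OF ifx])
    also have "\<dots> = integral {0..1} (\<lambda>t. t ^ n * K1 (fst x0, t * snd x0) * fst h + t ^ Suc n * K2 (fst x0, t * snd x0) * snd h)"
      by (simp add: fx_apply)
    also have "\<dots> = integral {0..1} (\<lambda>t. t ^ n * K1 (fst x0, t * snd x0)) * fst h + integral {0..1} (\<lambda>t. t ^ Suc n * K2 (fst x0, t * snd x0)) * snd h"
      by (rule trans[OF integral_add[OF integrable_on_mult_left[OF integrable_continuous_interval[OF c1]]
            integrable_on_mult_left[OF integrable_continuous_interval[OF c2]]]]) (simp only: integral_mult_left)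
    finally show ?thesis unfolding Iop_def by (simp add: algebra_simps)
  qed
  have E: "blinfun_apply (integral {0..1} (fx x0)) = (\<lambda>h. fst h * Iop n K1 x0 + snd h * Iop (Suc n) K2 x0)"
    by (rule ext) (rule E1)
  have F: "Iop n K = (\<lambda>x. integral {0..1} (f x))" unfolding Iop_def f_def by (rule refl)
  show ?thesis using D unfolding E F K1_def K2_def .
qed

inductive icls :: "real \<Rightarrow> (real \<times> real \<Rightarrow> real) \<Rightarrow> bool" for d where
  ic1: "smooth_on (Bx d) K \<Longrightarrow> icls d (\<lambda>x. c * Iop n K x)"
| ic2: "icls d f \<Longrightarrow> icls d g \<Longrightarrow> icls d (\<lambda>x. f x + g x)"

lemma icls_diff: "icls d f \<Longrightarrow> x \<in> Bx d \<Longrightarrow> f differentiable (at x)"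
proof (induction rule: icls.induct)
  case (ic1 K c n)
  have "Iop n K differentiable (at x)" using Iop_deriv[OF ic1] differentiableI by blast
  then show ?case using differentiable_mult differentiable_const by blast
qed (auto intro!: differentiable_add)

lemma icls_dd: "icls d f \<Longrightarrow> \<exists>g'. icls d g' \<and> (\<forall>x\<in>Bx d. dd [h] f x = g' x)"
proof (induction rule: icls.induct)
  case (ic1 K c n)
  show ?case
  proof (rule exI[of _ "\<lambda>x. (\<lambda>x. (c * fst h) * Iop n (dd [(1,0)] K) x) x + (\<lambda>x. (c * snd h) * Iop (Suc n) (dd [(0,1)] K) x) x"],
      intro conjI ballI)
    show "icls d (\<lambda>x. (\<lambda>x. (c * fst h) * Iop n (dd [(1,0)] K) x) x + (\<lambda>x. (c * snd h) * Iop (Suc n) (dd [(0,1)] K) x) x)"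
      by (intro icls.intros smooth_on_dd ic1)
    fix x assume x: "x \<in> Bx d"
    have "((\<lambda>x. c * Iop n K x) has_derivative (\<lambda>h. c * (fst h * Iop n (dd [(1,0)] K) x + snd h * Iop (Suc n) (dd [(0,1)] K) x))) (at x)"
      by (rule has_derivative_mult_right[OF Iop_deriv[OF ic1 x]])
    from dd1_eq[OF this] show "dd [h] (\<lambda>x. c * Iop n K x) x = (c * fst h) * Iop n (dd [(1,0)] K) x + (c * snd h) * Iop (Suc n) (dd [(0,1)] K) x"
      by (simp add: algebra_simps)
  qed
next
  case (ic2 f g)
  then obtain g1 g2 where fg: "icls d g1" "icls d g2" "\<forall>x\<in>Bx d. dd [h] f x = g1 x" "\<forall>x\<in>Bx d. dd [h] g x = g2 x"
    by auto
  show ?case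
  proof (rule exI[of _ "\<lambda>x. g1 x + g2 x"], intro conjI ballI)
    show "icls d (\<lambda>x. g1 x + g2 x)" using fg by (auto intro: icls.intros)
    fix x assume x: "x \<in> Bx d"
    have "((\<lambda>x. f x + g x) has_derivative (\<lambda>h. dd [h] f x + dd [h] g x)) (at x)"
      by (rule has_derivative_add[OF has_derivative_dd1[OF icls_diff[OF ic2(1) x]]
          has_derivative_dd1[OF icls_diff[OF ic2(2) x]]])
    from dd1_eq[OF this] show "dd [h] (\<lambda>x. f x + g x) x = g1 x + g2 x" using fg x by simp
  qed
qed

lemma smooth_Iop:
  assumes K: "smooth_on (Bx d) K" shows "smooth_on (Bx d) (Iop n K)"
proof (rule smooth_coind[where P="icls d"])
  show "open (Bx d)" by (rule Bx_open)
  have "icls d (\<lambda>x. 1 * Iop n K x)" by (rule ic1[OF K])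
  then show "icls d (Iop n K)" by simp
  show "\<forall>x\<in>Bx d. f differentiable at x" if "icls d f" for f using icls_diff[OF that] by blast
  show "\<exists>g'. icls d g' \<and> (\<forall>x\<in>Bx d. dd [h] f x = g' x)" if "icls d f" for f h
    using icls_dd[OF that] by blast
qed

lemma hadamard:
  assumes F: "smooth_on (Bx d) F" and F0: "\<And>x. x \<in> Bx d \<Longrightarrow> F (fst x, 0) = 0"
    and x: "x \<in> Bx d"
  shows "F x = snd x * Iop 0 (dd [(0,1)] F) x"
proof -
  obtain u w where xuw: "x = (u, w)" by (cases x)
  define F2 where "F2 = dd [(0,1)] F"
  have vd: "((\<lambda>t. F (u, t * w)) has_vector_derivative (w * F2 (u, t * w))) (at t within {0..1})"
    if t: "t \<in> {0..1}" for t
  proof -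
    have p: "(u, t * w) \<in> Bx d" using Bx_scale[OF x t] xuw by simp
    have dF: "F differentiable (at (u, t * w))" by (rule smooth_on_differentiable[OF F p])
    have bl: "bounded_linear (\<lambda>s::real. (0::real, s * w))"
      by (intro bounded_linear_Pair bounded_linear_zero bounded_linear_mult_left)
    have "((\<lambda>s. (u, s * w)) has_derivative (\<lambda>s. (0, s * w))) (at t)"
      by (rule has_derivative_eq_rhs[OF has_derivative_Pair[OF has_derivative_const has_derivative_mult_left[OF has_derivative_ident]]]) simp
    from diff_chain_at[OF this has_derivative_dd1[OF dF]]
    have "((\<lambda>t. F (u, t * w)) has_derivative (\<lambda>s. dd [(0, s * w)] F (u, t * w))) (at t)"
      by (simp add: o_def)
    moreover have "(\<lambda>s. dd [(0, s * w)] F (u, t * w)) = (\<lambda>s. s *\<^sub>R (w * F2 (u, t * w)))"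
    proof
      fix s
      have "dd [(0, s * w)] F (u, t * w) = 0 * dd [(1,0)] F (u, t * w) + (s * w) * dd [(0,1)] F (u, t * w)"
        by (rule dd_linear2[OF dF])
      then show "dd [(0, s * w)] F (u, t * w) = s *\<^sub>R (w * F2 (u, t * w))"
        unfolding F2_def by (simp only: mult_zero_left add_0_left real_scaleR_def mult.assoc)
    qed
    ultimately have "((\<lambda>t. F (u, t * w)) has_derivative (\<lambda>s. s *\<^sub>R (w * F2 (u, t * w)))) (at t)"
      by (simp only:)
    then show ?thesis unfolding has_vector_derivative_def by (rule has_derivative_at_withinI)
  qed
  have "((\<lambda>t. w * F2 (u, t * w)) has_integral (F (u, 1 * w) - F (u, 0 * w))) {0..1}"
    by (rule fundamental_theorem_of_calculus[OF _ vd]) auto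
  moreover have "F (u, 0 * w) = 0" using F0[OF x] xuw by simp
  ultimately have "((\<lambda>t. w * F2 (u, t * w)) has_integral F (u, w)) {0..1}"
    by simp
  then have "integral {0..1} (\<lambda>t. w * F2 (u, t * w)) = F (u, w)"
    by (rule integral_unique)
  then show ?thesis unfolding Iop_def F2_def xuw by simp
qed

lemma Iop0_axis: "Iop 0 K (u, 0) = K (u, 0)"
  unfolding Iop_def by simp

lemma deriv_quot:
  fixes g :: "real \<times> real \<Rightarrow> real"
  assumes g: "g differentiable (at p)" and g0: "g p = (0::real)"
  shows "((\<lambda>s. g (fst p, snd p + s) / s) \<longlongrightarrow> dd [(0,1)] g p) (at 0)"
proof -
  have q: "((\<lambda>s::real. (fst p, snd p + s)) has_derivative (\<lambda>s. (0, s))) (at 0)"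
    by (rule has_derivative_eq_rhs[OF has_derivative_Pair[OF has_derivative_const
          has_derivative_add[OF has_derivative_const has_derivative_ident]]]) simp
  have gp: "g differentiable (at (fst p, snd p + 0))" using g by simp
  from diff_chain_at[OF q has_derivative_dd1[OF gp]]
  have "((\<lambda>s. g (fst p, snd p + s)) has_derivative (\<lambda>s. dd [(0, s)] g p)) (at 0)"
    by (simp add: o_def)
  moreover have "(\<lambda>s. dd [(0, s)] g p) = (\<lambda>s. dd [(0,1)] g p * s)"
  proof
    fix s
    have "dd [(0, s)] g p = 0 * dd [(1,0)] g p + s * dd [(0,1)] g p" by (rule dd_linear2[OF g])
    then show "dd [(0, s)] g p = dd [(0,1)] g p * s" by simp
  qed
  ultimately have "((\<lambda>s. g (fst p, snd p + s)) has_field_derivative dd [(0,1)] g p) (at 0)"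
    unfolding has_field_derivative_def by simp
  then have "((\<lambda>y. (g (fst p, snd p + y) - g (fst p, snd p + 0)) / (y - 0)) \<longlongrightarrow> dd [(0,1)] g p) (at 0)"
    unfolding has_field_derivative_iff .
  then show ?thesis using g0 by simp
qed

lemma cont_line:
  fixes \<nu> :: "real \<times> real \<Rightarrow> 'b::topological_space"
  assumes "continuous (at p) \<nu>"
  shows "((\<lambda>s::real. \<nu> (fst p, snd p + s)) \<longlongrightarrow> \<nu> p) (at 0)"
proof -
  have "((\<lambda>s::real. (fst p, snd p + s)) \<longlongrightarrow> (fst p, snd p + 0)) (at 0)"
    by (intro tendsto_intros)
  then have "((\<lambda>s::real. (fst p, snd p + s)) \<longlongrightarrow> p) (at 0)" by simp
  from isCont_tendsto_compose[OF assms[unfolded isCont_def[symmetric]] this] show ?thesis .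
qed

lemma line_eventually:
  assumes "open Og" "p \<in> Og"
  shows "eventually (\<lambda>s::real. (fst p, snd p + s) \<in> Og) (at 0)"
proof -
  have "((\<lambda>s::real. (fst p, snd p + s)) \<longlongrightarrow> (fst p, snd p + 0)) (at 0)"
    by (intro tendsto_intros)
  then have "((\<lambda>s::real. (fst p, snd p + s)) \<longlongrightarrow> p) (at 0)" by simp
  from topological_tendstoD[OF this assms] show ?thesis .
qed

lemma keyK:
  fixes f2 f3 :: "real \<times> real \<Rightarrow> real" and \<nu> :: "real \<times> real \<Rightarrow> real \<times> real \<times> real"
  assumes Og: "open Og" "p \<in> Og" "Og \<subseteq> U" "Og \<subseteq> U0"
    and s2: "smooth_on U0 f2" and s3: "smooth_on U0 f3"
    and nu: "smooth_on U \<nu>" and nn: "\<forall>p\<in>U. norm (\<nu> p) = 1"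
    and perp: "\<forall>p\<in>U \<inter> U0. \<forall>X. inner (fst X, dd [X] f2 p, dd [X] f3 p) (\<nu> p) = 0"
    and f2v: "dd [(0,1)] f2 p = 0" and f2vv: "dd [(0,1)] (dd [(0,1)] f2) p \<noteq> 0"
  shows "dd [(0,1)] f3 p = 0 \<longleftrightarrow> snd (snd (\<nu> p)) \<noteq> 0"
proof -
  have pU: "p \<in> U \<inter> U0" using Og by auto
  have perp01: "dd [(0,1)] f2 q * fst (snd (\<nu> q)) + dd [(0,1)] f3 q * snd (snd (\<nu> q)) = 0" if "q \<in> U \<inter> U0" for q
    using perp[rule_format, OF that, of "(0,1)"] by (cases "\<nu> q") auto
  have perp10: "fst (\<nu> q) + dd [(1,0)] f2 q * fst (snd (\<nu> q)) + dd [(1,0)] f3 q * snd (snd (\<nu> q)) = 0" if "q \<in> U \<inter> U0" for q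
    using perp[rule_format, OF that, of "(1,0)"] by (cases "\<nu> q") auto
  show ?thesis
  proof
    assume f3v: "dd [(0,1)] f3 p = 0"
    show "snd (snd (\<nu> p)) \<noteq> 0"
    proof
      assume n3: "snd (snd (\<nu> p)) = 0"
      have n2: "fst (snd (\<nu> p)) \<noteq> 0"
      proof
        assume n2: "fst (snd (\<nu> p)) = 0"
        then have "fst (\<nu> p) = 0" using perp10[OF pU] n3 by simp
        then have "\<nu> p = 0" using n2 n3 by (cases "\<nu> p") (auto simp: zero_prod_def)
        then show False using nn pU by auto
      qed
      define g where "g s = fst (snd (\<nu> (fst p, snd p + s))) * (dd [(0,1)] f2 (fst p, snd p + s) / s)
          + snd (snd (\<nu> (fst p, snd p + s))) * (dd [(0,1)] f3 (fst p, snd p + s) / s)" for s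
      have cnu: "continuous (at p) \<nu>"
        using smooth_on_differentiable[OF nu] pU differentiable_imp_continuous_within by blast
      have lnu: "((\<lambda>s::real. \<nu> (fst p, snd p + s)) \<longlongrightarrow> \<nu> p) (at 0)" by (rule cont_line[OF cnu])
      have l2: "((\<lambda>s. dd [(0,1)] f2 (fst p, snd p + s) / s) \<longlongrightarrow> dd [(0,1)] (dd [(0,1)] f2) p) (at 0)"
        by (rule deriv_quot[OF smooth_on_differentiable[OF smooth_on_dd[OF s2]] f2v]) (use pU in auto)
      have l3: "((\<lambda>s. dd [(0,1)] f3 (fst p, snd p + s) / s) \<longlongrightarrow> dd [(0,1)] (dd [(0,1)] f3) p) (at 0)"
        by (rule deriv_quot[OF smooth_on_differentiable[OF smooth_on_dd[OF s3]] f3v]) (use pU in auto)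
      have "(g \<longlongrightarrow> fst (snd (\<nu> p)) * dd [(0,1)] (dd [(0,1)] f2) p + snd (snd (\<nu> p)) * dd [(0,1)] (dd [(0,1)] f3) p) (at 0)"
        unfolding g_def by (intro tendsto_add tendsto_mult tendsto_fst tendsto_snd lnu l2 l3)
      moreover have "eventually (\<lambda>s. g s = 0) (at 0)"
      proof -
        have "open (U \<inter> U0)" using Og smooth_on_open[OF nu] smooth_on_open[OF s2] by auto
        from line_eventually[OF this pU] show ?thesis
        proof (rule eventually_mono)
          fix s assume qs: "(fst p, snd p + s) \<in> U \<inter> U0"
          have alg: "a * (b / s) + c * (d / s) = (b * a + d * c) / s" for a b c d :: real
            by (simp add: add_divide_distrib algebra_simps)
          from perp01[OF qs] show "g s = 0" unfolding g_def alg by simp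
        qed
      qed
      ultimately have "((\<lambda>s. 0) \<longlongrightarrow> fst (snd (\<nu> p)) * dd [(0,1)] (dd [(0,1)] f2) p + snd (snd (\<nu> p)) * dd [(0,1)] (dd [(0,1)] f3) p) (at (0::real))"
        by (rule Lim_transform_eventually)
      then have "fst (snd (\<nu> p)) * dd [(0,1)] (dd [(0,1)] f2) p + snd (snd (\<nu> p)) * dd [(0,1)] (dd [(0,1)] f3) p = 0"
        by (simp add: tendsto_const_iff)
      then show False using n2 n3 f2vv by simp
    qed
  next
    assume n3: "snd (snd (\<nu> p)) \<noteq> 0"
    show "dd [(0,1)] f3 p = 0" using perp01[OF pU] f2v n3 by simp
  qed
qed

lemma open_preimage:
  assumes "open S" "continuous_on S g" "open B"
  shows "open (g -` B \<inter> S)"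
  using continuous_on_open_vimage[OF assms(1)] assms(2,3) by blast

lemma only_if:
  fixes f2 f3 :: "real \<times> real \<Rightarrow> real" and vf :: "real \<Rightarrow> real" and \<nu> :: "real \<times> real \<Rightarrow> real \<times> real \<times> real"
  assumes s2: "smooth_on U0 f2" and s3: "smooth_on U0 f3" and U00: "(0,0) \<in> U0"
    and V0: "smooth_on V0 vf" "0 \<in> V0" and v0: "vf 0 = 0"
    and e2: "e2 > 0" "\<forall>u. \<bar>u\<bar> < e2 \<longrightarrow> dd [(0,1)] f2 (u, vf u) = 0"
    and f2vv: "dd [(0,1)] (dd [(0,1)] f2) (0,0) \<noteq> 0"
    and f3v0: "dd [(0,1)] f3 (0,0) = 0"
    and U: "(0,0) \<in> U" and nu: "smooth_on U \<nu>" and nn: "\<forall>p\<in>U. norm (\<nu> p) = 1"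
    and perp: "\<forall>p\<in>U \<inter> U0. \<forall>X. inner (fst X, dd [X] f2 p, dd [X] f3 p) (\<nu> p) = 0"
  shows "\<exists>e>0. \<forall>u. \<bar>u\<bar> < e \<longrightarrow> dd [(0,1)] f3 (u, vf u) = 0"
proof -
  have oU: "open U" "open U0" "open V0"
    using smooth_on_open[OF nu] smooth_on_open[OF s2] smooth_on_open[OF V0(1)] by auto
  have oUU: "open (U \<inter> U0)" using oU by auto
  have c2vv: "continuous_on (U \<inter> U0) (dd [(0,1)] (dd [(0,1)] f2))"
    by (rule continuous_on_subset[OF smooth_on_continuous[OF smooth_on_dd[OF smooth_on_dd[OF s2]]]]) auto
  define Og where "Og = (dd [(0,1)] (dd [(0,1)] f2)) -` (-{0}) \<inter> (U \<inter> U0)"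
  have oOg: "open Og" unfolding Og_def by (rule open_preimage[OF oUU c2vv]) auto
  have Og0: "(0,0) \<in> Og" unfolding Og_def using f2vv U U00 by auto
  have OgU: "Og \<subseteq> U" "Og \<subseteq> U0" unfolding Og_def by auto
  have cvf: "continuous_on V0 vf" by (rule smooth_on_continuous[OF V0(1)])
  have cpv: "continuous_on V0 (\<lambda>u. (u, vf u))" by (intro continuous_on_Pair continuous_on_id cvf)
  define G where "G = (\<lambda>u. (u, vf u)) -` Og \<inter> V0"
  have oG: "open G" unfolding G_def by (rule open_preimage[OF oU(3) cpv oOg])
  have G0: "0 \<in> G" unfolding G_def using Og0 v0 V0(2) by auto
  obtain \<eta> where eta: "\<eta> > 0" "ball 0 \<eta> \<subseteq> G" using oG G0 open_contains_ball by blast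
  define e where "e = min \<eta> e2"
  have epos: "e > 0" unfolding e_def using eta e2 by auto
  have inG: "u \<in> G" if "\<bar>u\<bar> < e" for u
    using that eta(2) unfolding e_def by (auto simp: dist_real_def subset_iff)
  have inOg: "(u, vf u) \<in> Og" if "\<bar>u\<bar> < e" for u using inG[OF that] unfolding G_def by auto
  have inV0: "u \<in> V0" if "\<bar>u\<bar> < e" for u using inG[OF that] unfolding G_def by auto
  have crit: "dd [(0,1)] f2 (u, vf u) = 0" if "\<bar>u\<bar> < e" for u using e2(2) that unfolding e_def by auto
  have K: "dd [(0,1)] f3 (u, vf u) = 0 \<longleftrightarrow> snd (snd (\<nu> (u, vf u))) \<noteq> 0" if u: "\<bar>u\<bar> < e" for u
  proof (rule keyK[OF oOg inOg[OF u] OgU s2 s3 nu nn perp crit[OF u]])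
    show "dd [(0,1)] (dd [(0,1)] f2) (u, vf u) \<noteq> 0" using inOg[OF u] unfolding Og_def by auto
  qed
  define \<psi> where "\<psi> u = (snd (snd (\<nu> (u, vf u))))\<^sup>2 - (dd [(0,1)] f3 (u, vf u))\<^sup>2" for u
  have \<psi>ne: "\<psi> u \<noteq> 0" if u: "\<bar>u\<bar> < e" for u
  proof (cases "dd [(0,1)] f3 (u, vf u) = 0")
    case True then show ?thesis using K[OF u] unfolding \<psi>_def by simp
  next
    case False then show ?thesis using K[OF u] unfolding \<psi>_def by simp
  qed
  have \<psi>0: "\<psi> 0 > 0"
  proof -
    have "snd (snd (\<nu> (0, vf 0))) \<noteq> 0" using K[of 0] epos f3v0 v0 by simp
    then show ?thesis unfolding \<psi>_def using f3v0 v0 by simp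
  qed
  have c\<psi>: "continuous_on {-e<..<e} \<psi>"
  proof -
    have sub: "{-e<..<e} \<subseteq> V0" using inV0 by auto
    have cp: "continuous_on {-e<..<e} (\<lambda>u. (u, vf u))" by (rule continuous_on_subset[OF cpv sub])
    have imOg: "(\<lambda>u. (u, vf u)) ` {-e<..<e} \<subseteq> Og" using inOg by (auto simp: abs_less_iff)
    have imU: "(\<lambda>u. (u, vf u)) ` {-e<..<e} \<subseteq> U" using imOg OgU by blast
    have imU0: "(\<lambda>u. (u, vf u)) ` {-e<..<e} \<subseteq> U0" using imOg OgU by blast
    have c1: "continuous_on {-e<..<e} (\<lambda>u. \<nu> (u, vf u))"
      by (rule continuous_on_compose2[OF smooth_on_continuous[OF nu] cp imU])
    have c2: "continuous_on {-e<..<e} (\<lambda>u. dd [(0,1)] f3 (u, vf u))"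
      by (rule continuous_on_compose2[OF smooth_on_continuous[OF smooth_on_dd[OF s3]] cp imU0])
    show ?thesis unfolding \<psi>_def by (intro continuous_intros c1 c2)
  qed
  show ?thesis
  proof (intro exI[of _ e] conjI allI impI epos)
    fix u assume u: "\<bar>u\<bar> < e"
    show "dd [(0,1)] f3 (u, vf u) = 0"
    proof (rule ccontr)
      assume ne: "dd [(0,1)] f3 (u, vf u) \<noteq> 0"
      then have "snd (snd (\<nu> (u, vf u))) = 0" using K[OF u] by simp
      then have neg: "\<psi> u < 0" unfolding \<psi>_def using ne by simp
      have seg: "closed_segment 0 u \<subseteq> {-e<..<e}"
        using u by (auto simp: closed_segment_eq_real_ivl split: if_splits)
      have "0 \<in> closed_segment (\<psi> 0) (\<psi> u)"
        using neg \<psi>0 by (auto simp: closed_segment_eq_real_ivl)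
      from IVT'_closed_segment_real[OF this continuous_on_subset[OF c\<psi> seg]]
      obtain x where x: "x \<in> closed_segment 0 u" "\<psi> x = 0" by blast
      have "x \<in> {-e<..<e}" using x(1) seg by blast
      then have "\<bar>x\<bar> < e" by (simp add: abs_less_iff)
      then show False using \<psi>ne x(2) by blast
    qed
  qed
qed

lemma Bx_sub_ball: "d \<le> r / 2 \<Longrightarrow> Bx d \<subseteq> ball 0 r"
proof
  fix x :: "real \<times> real" assume d: "d \<le> r / 2" and x: "x \<in> Bx d"
  obtain a b where xab: "x = (a, b)" by (cases x)
  have "norm (a, b) \<le> norm a + norm b" by (rule norm_Pair_le)
  also have "\<dots> < d + d" using x xab unfolding Bx_def by (auto simp: abs_less_iff)
  finally have "norm x < r" using d xab by simp
  then show "x \<in> ball 0 r" unfolding mem_ball dist_0_norm .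
qed

lemma norm_triple: "norm (x::real, y::real, z::real) = sqrt (x\<^sup>2 + y\<^sup>2 + z\<^sup>2)"
  by (simp add: norm_Pair add.assoc)

lemma if_dir:
  fixes f2 f3 :: "real \<times> real \<Rightarrow> real" and vf :: "real \<Rightarrow> real"
  assumes s2: "smooth_on U0 f2" and s3: "smooth_on U0 f3" and U00: "(0,0) \<in> U0"
    and V0: "smooth_on V0 vf" "0 \<in> V0" and v0: "vf 0 = 0"
    and e2: "e2 > 0" "\<forall>u. \<bar>u\<bar> < e2 \<longrightarrow> dd [(0,1)] f2 (u, vf u) = 0"
    and f2vv: "dd [(0,1)] (dd [(0,1)] f2) (0,0) \<noteq> 0"
    and e3: "e3 > 0" "\<forall>u. \<bar>u\<bar> < e3 \<longrightarrow> dd [(0,1)] f3 (u, vf u) = 0"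
  shows "\<exists>W \<nu>. (0,0) \<in> W \<and> W \<subseteq> U0 \<and> smooth_on W \<nu> \<and> (\<forall>p\<in>W. norm (\<nu> p) = 1) \<and>
     (\<forall>p\<in>W. \<forall>X. inner (fst X, dd [X] f2 p, dd [X] f3 p) (\<nu> p) = (0::real))"
proof -
  have oU0: "open U0" using smooth_on_open[OF s2] .
  have oV0: "open V0" using smooth_on_open[OF V0(1)] .
  have oVU: "open (V0 \<times> (UNIV :: real set))" using oV0 by (simp add: open_Times)
  define bb where "bb = (\<lambda>x::real\<times>real. snd x + vf (fst x))"
  have svf: "smooth_on (V0 \<times> UNIV) (\<lambda>x::real\<times>real. vf (fst x))" by (rule smooth_comp1[OF V0(1)])
  have sbb: "smooth_on (V0 \<times> UNIV) bb" unfolding bb_def by (rule smooth_add[OF smooth_snd[OF oVU] svf])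
  have sfst: "smooth_on (V0 \<times> UNIV) (fst :: real \<times> real \<Rightarrow> real)" by (rule smooth_fst[OF oVU])
  have svd: "smooth_on (V0 \<times> UNIV) (\<lambda>p::real\<times>real. snd p - vf (fst p))"
    by (rule smooth_diff[OF smooth_snd[OF oVU] svf])
  define S1 where "S1 = (\<lambda>x. (fst x, bb x)) -` U0 \<inter> (V0 \<times> UNIV)"
  have cfb: "continuous_on (V0 \<times> UNIV) (\<lambda>x::real\<times>real. (fst x, bb x))"
    by (intro continuous_on_Pair smooth_on_continuous[OF sfst] smooth_on_continuous[OF sbb])
  have oS1: "open S1" unfolding S1_def by (rule open_preimage[OF oVU cfb oU0])
  have S10: "(0,0) \<in> S1" unfolding S1_def bb_def using U00 V0(2) v0 by simp
  have S1sub: "S1 \<subseteq> V0 \<times> UNIV" unfolding S1_def by auto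
  have S1U0: "(fst x, bb x) \<in> U0" if "x \<in> S1" for x using that unfolding S1_def by auto
  define F2 where "F2 = (\<lambda>x. dd [(0,1)] f2 (fst x, bb x))"
  define F3 where "F3 = (\<lambda>x. dd [(0,1)] f3 (fst x, bb x))"
  have sF2: "smooth_on S1 F2" unfolding F2_def
    by (rule smooth_comp2[OF smooth_on_subset[OF sfst oS1 S1sub] smooth_on_subset[OF sbb oS1 S1sub] S1U0 smooth_on_dd[OF s2]])
  have sF3: "smooth_on S1 F3" unfolding F3_def
    by (rule smooth_comp2[OF smooth_on_subset[OF sfst oS1 S1sub] smooth_on_subset[OF sbb oS1 S1sub] S1U0 smooth_on_dd[OF s3]])
  obtain r where r: "r > 0" "ball (0,0) r \<subseteq> S1" using oS1 S10 open_contains_ball by blast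
  define d where "d = min (r / 2) (min e2 e3)"
  have dpos: "d > 0" unfolding d_def using r e2 e3 by auto
  have "Bx d \<subseteq> ball 0 r" by (rule Bx_sub_ball) (simp add: d_def)
  moreover have "ball (0::real\<times>real) r = ball (0,0) r" by (simp add: zero_prod_def)
  ultimately have BS1: "Bx d \<subseteq> S1" using r(2) by blast
  have sF2B: "smooth_on (Bx d) F2" by (rule smooth_on_subset[OF sF2 Bx_open BS1])
  have sF3B: "smooth_on (Bx d) F3" by (rule smooth_on_subset[OF sF3 Bx_open BS1])
  have F2ax: "F2 (fst x, 0) = 0" if "x \<in> Bx d" for x
    using that e2(2) unfolding F2_def bb_def Bx_def d_def by auto
  have F3ax: "F3 (fst x, 0) = 0" if "x \<in> Bx d" for x
    using that e3(2) unfolding F3_def bb_def Bx_def d_def by auto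
  define P where "P = Iop 0 (dd [(0,1)] F2)"
  define Q where "Q = Iop 0 (dd [(0,1)] F3)"
  have sP: "smooth_on (Bx d) P" unfolding P_def by (rule smooth_Iop[OF smooth_on_dd[OF sF2B]])
  have sQ: "smooth_on (Bx d) Q" unfolding Q_def by (rule smooth_Iop[OF smooth_on_dd[OF sF3B]])
  have hP: "F2 x = snd x * P x" if "x \<in> Bx d" for x unfolding P_def by (rule hadamard[OF sF2B F2ax that])
  have hQ: "F3 x = snd x * Q x" if "x \<in> Bx d" for x unfolding Q_def by (rule hadamard[OF sF3B F3ax that])
  have P0: "P (0,0) \<noteq> 0"
  proof -
    have x0: "(0::real,0::real) \<in> S1" by (rule S10)
    have x0': "(0::real, 0::real) \<in> V0 \<times> UNIV" using V0(2) by simp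
    have dbb: "(bb has_derivative (\<lambda>h. snd h + fst h * dd [1] vf (fst (0::real,0::real)))) (at (0,0))"
      unfolding bb_def
      by (rule has_derivative_add[OF bounded_linear_imp_has_derivative[OF bounded_linear_snd]
            has_derivative_comp1[OF smooth_on_differentiable[OF V0(1)]]]) (use V0(2) in simp)
    note hd = has_derivative_comp2[OF smooth_on_differentiable[OF sfst x0'] smooth_on_differentiable[OF sbb x0']
            smooth_on_differentiable[OF smooth_on_dd[OF s2] S1U0[OF x0]]]
    have "(F2 has_derivative (\<lambda>h. dd [h] fst (0::real,0::real) * dd [(1,0)] (dd [(0,1)] f2) (fst (0::real,0::real), bb (0,0))
        + dd [h] bb (0,0) * dd [(0,1)] (dd [(0,1)] f2) (fst (0::real,0::real), bb (0,0)))) (at (0,0))"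
      unfolding F2_def using hd by simp
    from dd1_eq[OF this, of "(0,1)"]
    have "dd [(0,1)] F2 (0,0) = dd [(0,1)] fst (0::real,0::real) * dd [(1,0)] (dd [(0,1)] f2) (fst (0::real,0::real), bb (0,0))
        + dd [(0,1)] bb (0,0) * dd [(0,1)] (dd [(0,1)] f2) (fst (0::real,0::real), bb (0,0))" .
    moreover have "dd [(0,1)] fst (0::real,0::real) = (0::real)"
      using dd1_eq[OF bounded_linear_imp_has_derivative[OF bounded_linear_fst], of "(0::real,1::real)" "(0::real,0::real)"] by simp
    moreover have "dd [(0,1)] bb (0,0) = 1" using dd1_eq[OF dbb, of "(0,1)"] by simp
    moreover have "bb (0,0) = 0" unfolding bb_def using v0 by simp
    ultimately have "dd [(0,1)] F2 (0,0) = dd [(0,1)] (dd [(0,1)] f2) (0,0)" by simp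
    then show ?thesis unfolding P_def using Iop0_axis[of "dd [(0,1)] F2" 0] f2vv by simp
  qed
  define \<Theta> where "\<Theta> = (\<lambda>p::real\<times>real. (fst p, snd p - vf (fst p)))"
  define W0 where "W0 = \<Theta> -` Bx d \<inter> (U0 \<inter> (V0 \<times> UNIV))"
  have oUV: "open (U0 \<inter> (V0 \<times> UNIV))" using oU0 oVU by auto
  have UVsub: "U0 \<inter> (V0 \<times> UNIV) \<subseteq> V0 \<times> UNIV" by auto
  have c\<Theta>: "continuous_on (U0 \<inter> (V0 \<times> UNIV)) \<Theta>" unfolding \<Theta>_def
    by (intro continuous_on_Pair continuous_on_subset[OF smooth_on_continuous[OF sfst] UVsub]
        continuous_on_subset[OF smooth_on_continuous[OF svd] UVsub])
  have oW0: "open W0" unfolding W0_def by (rule open_preimage[OF oUV c\<Theta> Bx_open])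
  have W0sub: "W0 \<subseteq> V0 \<times> UNIV" "W0 \<subseteq> U0" unfolding W0_def by auto
  have W0B: "\<Theta> p \<in> Bx d" if "p \<in> W0" for p using that unfolding W0_def by auto
  define a where "a = (\<lambda>p. P (\<Theta> p))"
  define b where "b = (\<lambda>p. Q (\<Theta> p))"
  have sfstW0: "smooth_on W0 (fst :: real \<times> real \<Rightarrow> real)" by (rule smooth_on_subset[OF sfst oW0 W0sub(1)])
  have svdW0: "smooth_on W0 (\<lambda>p::real\<times>real. snd p - vf (fst p))" by (rule smooth_on_subset[OF svd oW0 W0sub(1)])
  have W0B': "(fst p, snd p - vf (fst p)) \<in> Bx d" if "p \<in> W0" for p using W0B[OF that] unfolding \<Theta>_def .
  have sa: "smooth_on W0 a" unfolding a_def \<Theta>_def by (rule smooth_comp2[OF sfstW0 svdW0 W0B' sP])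
  have sb: "smooth_on W0 b" unfolding b_def \<Theta>_def by (rule smooth_comp2[OF sfstW0 svdW0 W0B' sQ])
  define W where "W = a -` (-{0}) \<inter> W0"
  have oW: "open W" unfolding W_def by (rule open_preimage[OF oW0 smooth_on_continuous[OF sa]]) auto
  have WW0: "W \<subseteq> W0" unfolding W_def by auto
  have WU0: "W \<subseteq> U0" using WW0 W0sub by auto
  have W0: "(0,0) \<in> W"
  proof -
    have "\<Theta> (0,0) = (0,0)" unfolding \<Theta>_def using v0 by simp
    moreover have "(0::real,0::real) \<in> Bx d" unfolding Bx_def using dpos by auto
    ultimately have "(0,0) \<in> W0" unfolding W0_def using U00 V0(2) by auto
    moreover have "a (0,0) \<noteq> 0" unfolding a_def using \<open>\<Theta> (0,0) = (0,0)\<close> P0 by simp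
    ultimately show ?thesis unfolding W_def by auto
  qed
  have anz: "a p \<noteq> 0" if "p \<in> W" for p using that unfolding W_def by auto
  have f2v: "dd [(0,1)] f2 p = (snd p - vf (fst p)) * a p" if "p \<in> W" for p
  proof -
    have "F2 (\<Theta> p) = snd (\<Theta> p) * P (\<Theta> p)" by (rule hP[OF W0B]) (use that WW0 in auto)
    moreover have "F2 (\<Theta> p) = dd [(0,1)] f2 p" unfolding F2_def \<Theta>_def bb_def by simp
    ultimately show ?thesis unfolding a_def \<Theta>_def by simp
  qed
  have f3v: "dd [(0,1)] f3 p = (snd p - vf (fst p)) * b p" if "p \<in> W" for p
  proof -
    have "F3 (\<Theta> p) = snd (\<Theta> p) * Q (\<Theta> p)" by (rule hQ[OF W0B]) (use that WW0 in auto)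
    moreover have "F3 (\<Theta> p) = dd [(0,1)] f3 p" unfolding F3_def \<Theta>_def bb_def by simp
    ultimately show ?thesis unfolding b_def \<Theta>_def by simp
  qed
  have saW: "smooth_on W a" by (rule smooth_on_subset[OF sa oW WW0])
  have sbW: "smooth_on W b" by (rule smooth_on_subset[OF sb oW WW0])
  have s2u: "smooth_on W (dd [(1,0)] f2)" by (rule smooth_on_subset[OF smooth_on_dd[OF s2] oW WU0])
  have s3u: "smooth_on W (dd [(1,0)] f3)" by (rule smooth_on_subset[OF smooth_on_dd[OF s3] oW WU0])
  define M1 where "M1 = (\<lambda>p. dd [(1,0)] f2 p * b p - dd [(1,0)] f3 p * a p)"
  define M2 where "M2 = (\<lambda>p. - b p)"
  define NN where "NN = (\<lambda>p. M1 p * M1 p + M2 p * M2 p + a p * a p)"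
  define c where "c = (\<lambda>p. NN p powr (- 1 / 2))"
  have sM1: "smooth_on W M1" unfolding M1_def by (intro smooth_diff smooth_mult s2u s3u saW sbW)
  have sM2: "smooth_on W M2" unfolding M2_def by (intro smooth_minus sbW)
  have sNN: "smooth_on W NN" unfolding NN_def by (intro smooth_add smooth_mult sM1 sM2 saW)
  have NNpos: "NN p > 0" if "p \<in> W" for p
  proof -
    have "a p * a p > 0" using anz[OF that] not_real_square_gt_zero by blast
    moreover have "M1 p * M1 p \<ge> 0" "M2 p * M2 p \<ge> 0" by auto
    ultimately show ?thesis unfolding NN_def by linarith
  qed
  have sc: "smooth_on W c" unfolding c_def by (rule smooth_powr_comp[OF sNN NNpos])
  define \<nu> where "\<nu> = (\<lambda>p. (c p * M1 p, c p * M2 p, c p * a p))"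
  have snu: "smooth_on W \<nu>" unfolding \<nu>_def
    by (intro smooth_pair smooth_mult sc sM1 sM2 saW)
  have cc: "c p * c p * NN p = 1" if "p \<in> W" for p
  proof -
    have "c p * c p = NN p powr (- 1 / 2 + - 1 / 2)" unfolding c_def by (rule powr_add[symmetric])
    also have "\<dots> = NN p powr (- 1)" by simp
    also have "\<dots> = inverse (NN p powr 1)" by (rule powr_minus)
    also have "\<dots> = inverse (NN p)" using NNpos[OF that] by simp
    finally show ?thesis using NNpos[OF that] by simp
  qed
  have nn: "norm (\<nu> p) = 1" if "p \<in> W" for p
  proof -
    have "norm (\<nu> p) = sqrt ((c p * M1 p)\<^sup>2 + (c p * M2 p)\<^sup>2 + (c p * a p)\<^sup>2)"
      unfolding \<nu>_def by (rule norm_triple)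
    also have "(c p * M1 p)\<^sup>2 + (c p * M2 p)\<^sup>2 + (c p * a p)\<^sup>2 = c p * c p * NN p"
      unfolding NN_def by (simp add: power2_eq_square algebra_simps)
    finally show ?thesis using cc[OF that] by simp
  qed
  have perp: "inner (fst X, dd [X] f2 p, dd [X] f3 p) (\<nu> p) = 0" if p: "p \<in> W" for p X
  proof -
    obtain x1 x2 where X: "X = (x1, x2)" by (cases X)
    have d2: "dd [(x1, x2)] f2 p = x1 * dd [(1,0)] f2 p + x2 * dd [(0,1)] f2 p"
      by (rule dd_linear2[OF smooth_on_differentiable[OF s2]]) (use p WU0 in auto)
    have d3: "dd [(x1, x2)] f3 p = x1 * dd [(1,0)] f3 p + x2 * dd [(0,1)] f3 p"
      by (rule dd_linear2[OF smooth_on_differentiable[OF s3]]) (use p WU0 in auto)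
    show ?thesis unfolding X d2 d3 f2v[OF p] f3v[OF p] \<nu>_def M1_def M2_def
      by (simp add: algebra_simps)
  qed
  show ?thesis
    by (rule exI[of _ W], rule exI[of _ \<nu>]) (use W0 WU0 snu nn perp in blast)
qed

theorem mainTheorem13:
  fixes f2 f3 :: "real \<times> real \<Rightarrow> real" and vf :: "real \<Rightarrow> real"
  defines "f \<equiv> (\<lambda>(u, v). (u, f2 (u, v), f3 (u, v)))"
  assumes smooth: "smooth_near 0 f"
    and f0: "f (0, 0) = 0"
    and fv0: "frechet_derivative f (at (0, 0)) (0, 1) = 0"
    and jet: "A2_equiv f (\<lambda>(u, v). (u, v ^ 2, 0))"
    and f2vv: "dd [(0, 1), (0, 1)] f2 (0, 0) \<noteq> 0"
    and vsmooth: "smooth_near 0 vf"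
    and v0: "vf 0 = 0"
    and vcrit: "\<exists>e>0. \<forall>u. \<bar>u\<bar> < e \<longrightarrow> dd [(0, 1)] f2 (u, vf u) = 0"
  shows "frontal_near0 f \<longleftrightarrow> (\<exists>e>0. \<forall>u. \<bar>u\<bar> < e \<longrightarrow> dd [(0, 1)] f3 (u, vf u) = 0)"
proof -
  obtain U0 where U0: "0 \<in> U0" "smooth_on U0 f" using smooth unfolding smooth_near_def by blast
  have U00: "(0,0) \<in> U0" using U0(1) by (simp add: zero_prod_def)
  have feq: "f = (\<lambda>p. (fst p, f2 p, f3 p))" unfolding f_def by (rule ext) (simp add: case_prod_beta)
  have bl2: "bounded_linear (\<lambda>y::real\<times>real\<times>real. fst (snd y))"
    by (rule bounded_linear_compose[OF bounded_linear_fst bounded_linear_snd])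
  have bl3: "bounded_linear (\<lambda>y::real\<times>real\<times>real. snd (snd y))"
    by (rule bounded_linear_compose[OF bounded_linear_snd bounded_linear_snd])
  have s2: "smooth_on U0 f2"
    using smooth_linear_comp[OF U0(2) bl2] by (simp add: feq)
  have s3: "smooth_on U0 f3"
    using smooth_linear_comp[OF U0(2) bl3] by (simp add: feq)
  have Df: "frechet_derivative f (at p) X = (fst X, dd [X] f2 p, dd [X] f3 p)" if p: "p \<in> U0" for p X
  proof -
    have "((\<lambda>p. (fst p, f2 p, f3 p)) has_derivative (\<lambda>X. (fst X, dd [X] f2 p, dd [X] f3 p))) (at p)"
      by (rule has_derivative_Pair[OF bounded_linear_imp_has_derivative[OF bounded_linear_fst]
            has_derivative_Pair[OF has_derivative_dd1[OF smooth_on_differentiable[OF s2 p]]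
              has_derivative_dd1[OF smooth_on_differentiable[OF s3 p]]]])
    then have "frechet_derivative (\<lambda>p. (fst p, f2 p, f3 p)) (at p) = (\<lambda>X. (fst X, dd [X] f2 p, dd [X] f3 p))"
      by (rule frechet_derivative_at[symmetric])
    then show ?thesis unfolding feq by simp
  qed
  obtain V0 where V0: "0 \<in> V0" "smooth_on V0 vf" using vsmooth unfolding smooth_near_def by blast
  obtain e2 where e2: "e2 > 0" "\<forall>u. \<bar>u\<bar> < e2 \<longrightarrow> dd [(0, 1)] f2 (u, vf u) = 0" using vcrit by blast
  have f2vv': "dd [(0,1)] (dd [(0,1)] f2) (0,0) \<noteq> 0" using f2vv by (simp add: dd.simps)
  have f3v0: "dd [(0,1)] f3 (0,0) = 0" using fv0 Df[OF U00, of "(0,1)"] by (simp add: zero_prod_def)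
  show ?thesis
  proof
    assume "frontal_near0 f"
    then obtain U \<nu> where U: "0 \<in> U" "smooth_on U \<nu>" "\<forall>p\<in>U. norm (\<nu> p) = 1"
      "\<forall>p\<in>U. \<forall>X. inner (frechet_derivative f (at p) X) (\<nu> p) = 0"
      unfolding frontal_near0_def by blast
    have U0': "(0,0) \<in> U" using U(1) by (simp add: zero_prod_def)
    have perp: "\<forall>p\<in>U \<inter> U0. \<forall>X. inner (fst X, dd [X] f2 p, dd [X] f3 p) (\<nu> p) = 0"
      using U(4) Df by auto
    show "\<exists>e>0. \<forall>u. \<bar>u\<bar> < e \<longrightarrow> dd [(0, 1)] f3 (u, vf u) = 0"
      by (rule only_if[OF s2 s3 U00 V0(2,1) v0 e2 f2vv' f3v0 U0' U(2,3) perp])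
  next
    assume "\<exists>e>0. \<forall>u. \<bar>u\<bar> < e \<longrightarrow> dd [(0, 1)] f3 (u, vf u) = 0"
    then obtain e3 where e3: "e3 > 0" "\<forall>u. \<bar>u\<bar> < e3 \<longrightarrow> dd [(0, 1)] f3 (u, vf u) = 0" by blast
    obtain W \<nu> where W: "(0,0) \<in> W" "W \<subseteq> U0" "smooth_on W \<nu>" "\<forall>p\<in>W. norm (\<nu> p) = 1"
      "\<forall>p\<in>W. \<forall>X. inner (fst X, dd [X] f2 p, dd [X] f3 p) (\<nu> p) = (0::real)"
      using if_dir[OF s2 s3 U00 V0(2,1) v0 e2 f2vv' e3] by blast
    show "frontal_near0 f" unfolding frontal_near0_def
    proof (intro exI[of _ W] exI[of _ \<nu>] conjI)
      show "0 \<in> W" using W(1) by (simp add: zero_prod_def)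
      show "\<forall>p\<in>W. \<forall>X. inner (frechet_derivative f (at p) X) (\<nu> p) = 0"
        using W(2,5) Df by auto
    qed (use W in auto)
  qed
qed

end
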